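(* Let $L$ be a Lelek fan with top $v$ and let $W$ be a wedge in $L$. Then there is a retraction from $L$ onto $W$.
   Context: A continuum is a nonempty compact connected metric space. A dendroid is an arcwise connected, hereditarily unicoherent continuum. A point $x$ of a dendroid $X$ is a ramification point if $x$ is the top (the branch point) of some simple triod in $X$. A fan is a dendroid with at most one ramification point; this point, if it exists, is called the top of the fan. For a fan $X$, a point $x$ is an end point of $X$ if $x$ is an end point of every arc in $X$ containing $x$; $E(X)$ denotes the set of end points of $X$. A fan $X$ with top $v$ is smooth if for every $x\in X$ and every sequence $x_n\to x$ in $X$, the arcs from $v$ to $x_n$ converge (in the Hausdorff metric) to the arc from $v$ to $x$. A Lelek fan is a smooth fan $X$ with $\mathrm{Cl}(E(X))=X$. If $L$ is a Lelek fan with top $v$, a subcontinuum $W\subseteq L$ is a wedge in $L$ if both $W$ and $(L\setminus W)\cup\{v\}$ are Lelek fans. A retraction from a space $X$ onto a subspace $Y$ is a continuous map $r:X\to Y$ with $r(y)=y$ for all $y\in Y$. *)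

theory Defs
  imports "HOL-Analysis.Analysis"
begin

definition continuum :: "'a::metric_space set \<Rightarrow> bool" where
  "continuum X \<longleftrightarrow> X \<noteq> {} \<and> compact X \<and> connected X"

definition arc_from_to :: "'a::metric_space set \<Rightarrow> 'a \<Rightarrow> 'a \<Rightarrow> bool" where
  "arc_from_to A a b \<longleftrightarrow> (\<exists>g. arc g \<and> path_image g = A \<and> pathstart g = a \<and> pathfinish g = b)"

definition is_arc :: "'a::metric_space set \<Rightarrow> bool" where
  "is_arc A \<longleftrightarrow> (\<exists>a b. arc_from_to A a b)"

definition arc_endpoint :: "'a::metric_space \<Rightarrow> 'a set \<Rightarrow> bool" where
  "arc_endpoint x A \<longleftrightarrow> (\<exists>b. arc_from_to A x b)"

definition arcwise_connected :: "'a::metric_space set \<Rightarrow> bool" where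
  "arcwise_connected X \<longleftrightarrow>
     (\<forall>x\<in>X. \<forall>y\<in>X. x \<noteq> y \<longrightarrow> (\<exists>A. A \<subseteq> X \<and> arc_from_to A x y))"

definition hereditarily_unicoherent :: "'a::metric_space set \<Rightarrow> bool" where
  "hereditarily_unicoherent X \<longleftrightarrow>
     (\<forall>A B. A \<subseteq> X \<and> B \<subseteq> X \<and> continuum A \<and> continuum B \<longrightarrow> connected (A \<inter> B))"

definition dendroid :: "'a::metric_space set \<Rightarrow> bool" where
  "dendroid X \<longleftrightarrow> continuum X \<and> arcwise_connected X \<and> hereditarily_unicoherent X"

definition ramification_point :: "'a::metric_space set \<Rightarrow> 'a \<Rightarrow> bool" where
  "ramification_point X x \<longleftrightarrow>
     (\<exists>A1 A2 A3 a1 a2 a3. arc_from_to A1 x a1 \<and> arc_from_to A2 x a2 \<and> arc_from_to A3 x a3 \<and>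
        A1 \<union> A2 \<union> A3 \<subseteq> X \<and>
        A1 \<inter> A2 = {x} \<and> A1 \<inter> A3 = {x} \<and> A2 \<inter> A3 = {x})"

definition fan :: "'a::metric_space set \<Rightarrow> bool" where
  "fan X \<longleftrightarrow> dendroid X \<and> (\<forall>x y. ramification_point X x \<and> ramification_point X y \<longrightarrow> x = y)"

definition end_points :: "'a::metric_space set \<Rightarrow> 'a set" where
  "end_points X = {x\<in>X. \<forall>A. A \<subseteq> X \<and> is_arc A \<and> x \<in> A \<longrightarrow> arc_endpoint x A}"

definition arc_in :: "'a::metric_space set \<Rightarrow> 'a \<Rightarrow> 'a \<Rightarrow> 'a set" where
  "arc_in X a b = (if a = b then {a} else (THE A. A \<subseteq> X \<and> arc_from_to A a b))"

definition hausdorff_dist :: "'a::metric_space set \<Rightarrow> 'a set \<Rightarrow> real" where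
  "hausdorff_dist S T = max (SUP x\<in>S. setdist {x} T) (SUP y\<in>T. setdist {y} S)"

definition smooth_fan :: "'a::metric_space set \<Rightarrow> 'a \<Rightarrow> bool" where
  "smooth_fan X v \<longleftrightarrow> fan X \<and> ramification_point X v \<and>
     (\<forall>x\<in>X. \<forall>s. (\<forall>n. s n \<in> X) \<and> s \<longlonglongrightarrow> x \<longrightarrow>
        (\<lambda>n. hausdorff_dist (arc_in X v (s n)) (arc_in X v x)) \<longlonglongrightarrow> 0)"

definition lelek_fan :: "'a::metric_space set \<Rightarrow> 'a \<Rightarrow> bool" where
  "lelek_fan X v \<longleftrightarrow> smooth_fan X v \<and> closure (end_points X) = X"

definition is_lelek_fan :: "'a::metric_space set \<Rightarrow> bool" where
  "is_lelek_fan X \<longleftrightarrow> (\<exists>w. lelek_fan X w)"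

definition wedge :: "'a::metric_space set \<Rightarrow> 'a \<Rightarrow> 'a set \<Rightarrow> bool" where
  "wedge L v W \<longleftrightarrow> W \<subseteq> L \<and> continuum W \<and> is_lelek_fan W \<and> is_lelek_fan ((L - W) \<union> {v})"

end

theory Submission
  imports Defs
begin

lemma lelek_continuum:
  assumes "lelek_fan X w" shows "continuum X"
proof -
  have "smooth_fan X w" using assms by (simp add: lelek_fan_def)
  then have "fan X" by (simp add: smooth_fan_def)
  then have "dendroid X" by (simp add: fan_def)
  then show ?thesis by (simp add: dendroid_def)
qed

lemma lelek_compact:
  assumes "is_lelek_fan X" shows "compact X"
proof -
  obtain w where "lelek_fan X w" using assms by (auto simp: is_lelek_fan_def)
  then show ?thesis using lelek_continuum by (auto simp: continuum_def)
qed

lemma top_in: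
  assumes "lelek_fan L v" shows "v \<in> L"
proof -
  have "ramification_point L v" using assms by (simp add: lelek_fan_def smooth_fan_def)
  then obtain A1 a1 where "arc_from_to A1 v a1" "A1 \<subseteq> L"
    unfolding ramification_point_def by blast
  then show ?thesis unfolding arc_from_to_def by auto
qed

theorem mainTheorem7:
  fixes L W :: "'a::metric_space set" and v :: 'a
  assumes "lelek_fan L v"
    and "wedge L v W"
  shows "\<exists>r. retraction L W r"
proof -
  define M where "M = (L - W) \<union> {v}"
  have WL: "W \<subseteq> L" and cW: "continuum W" and lM: "is_lelek_fan M"
    using assms(2) unfolding wedge_def M_def by auto
  have vL: "v \<in> L" using top_in[OF assms(1)] .
  have conL: "connected L" using lelek_continuum[OF assms(1)] by (simp add: continuum_def)
  have clW: "closed W" using cW unfolding continuum_def by (simp add: compact_imp_closed)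
  have clM: "closed M" using lelek_compact[OF lM] by (simp add: compact_imp_closed)
  have LWM: "L = W \<union> M" using WL vL unfolding M_def by auto
  have vW: "v \<in> W"
  proof (rule ccontr)
    assume "v \<notin> W"
    then have d: "W \<inter> M = {}" unfolding M_def by auto
    have ne1: "W \<noteq> {}" using cW unfolding continuum_def by auto
    have ne2: "M \<noteq> {}" unfolding M_def by auto
    have "\<not> connected (W \<union> M)"
      unfolding connected_closed using d ne1 ne2 clW clM by blast
    then show False using conL LWM by simp
  qed
  define r where "r = (\<lambda>x. if x \<in> W then x else v)"
  have c1: "continuous_on W r"
    by (rule continuous_on_eq[OF continuous_on_id]) (auto simp: r_def)
  have c2: "continuous_on M r"
    by (rule continuous_on_eq[OF continuous_on_const[of _ v]]) (auto simp: r_def M_def)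
  have "continuous_on L r" using continuous_on_closed_Un[OF clW clM c1 c2] LWM by simp
  moreover have "r \<in> L \<rightarrow> W" using vW by (auto simp: r_def)
  ultimately have "retraction L W r" unfolding retraction_def using WL by (auto simp: r_def)
  then show ?thesis by blast
qed

end
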